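(* Let $\rho$ be a probability distribution on $\mathbb N_0$ with finite first moment, $\sum_k k\rho_k<\infty$, and let $\mathcal T$ be a Galton–Watson tree $\mathrm{GW}(\rho)$. Then for every non-decreasing family of positive constants $(C_{k,T})$ and every finite measure $\varsigma$ on $\mathcal J$, $\mathcal T$ is a.s. finitely dissociable.
   Context: $\mathrm{GW}(\rho)$ is the random rooted tree in which the root and every other vertex independently have a number of children distributed according to $\rho$. Finite dissociability. Fix a countable set $\mathcal J$, a finite measure $\varsigma$ on $\mathcal J$ with $\varsigma(\mathcal J)>0$, and constants $C_{k,T}\in(0,\infty)$, $k\in\mathbb N$, $T\in\mathbb R_+$, non-decreasing in each index. For a vertex $v$ of a graph $G$ let $\mathrm{cl}_v$ denote $v$ together with its neighbours. A deterministic locally finite graph $G$ is finitely dissociable if for every $T\in(0,\infty)$ there is $\Delta\in(0,T]$ such that the following holds: if $(N_v)_{v\in V_G}$ are i.i.d. Poisson random measures on $\mathbb R_+^2\times\mathcal J$ with intensity $\mathrm{Leb}^2\otimes\varsigma$ and a vertex $v$ is called active when $N_v((0,\Delta]\times(0,C_{|\mathrm{cl}_v|,T}]\times\mathcal J)>0$ (so vertices are independently active with probability $1-\exp(-\Delta\varsigma(\mathcal J)C_{|\mathrm{cl}_v|,T})$), then a.s. every connected component of the subgraph of $G$ induced by the active vertices is finite. A random graph is a.s. finitely dissociable if its realization is finitely dissociable almost surely. *)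

theory Defs
  imports "HOL-Probability.Probability"
begin

definition nbrs :: "'v set \<Rightarrow> ('v \<Rightarrow> 'v \<Rightarrow> bool) \<Rightarrow> 'v \<Rightarrow> 'v set" where
  "nbrs V E v = {w \<in> V. E v w}"

definition cl :: "'v set \<Rightarrow> ('v \<Rightarrow> 'v \<Rightarrow> bool) \<Rightarrow> 'v \<Rightarrow> 'v set" where
  "cl V E v = insert v (nbrs V E v)"

definition locally_finite :: "'v set \<Rightarrow> ('v \<Rightarrow> 'v \<Rightarrow> bool) \<Rightarrow> bool" where
  "locally_finite V E \<longleftrightarrow> (\<forall>v\<in>V. finite (nbrs V E v))"

definition induced_edge :: "'v set \<Rightarrow> ('v \<Rightarrow> 'v \<Rightarrow> bool) \<Rightarrow> 'v set \<Rightarrow> 'v \<Rightarrow> 'v \<Rightarrow> bool" where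
  "induced_edge V E A x y \<longleftrightarrow> x \<in> V \<and> y \<in> V \<and> x \<in> A \<and> y \<in> A \<and> E x y"

definition all_components_finite :: "'v set \<Rightarrow> ('v \<Rightarrow> 'v \<Rightarrow> bool) \<Rightarrow> 'v set \<Rightarrow> bool" where
  "all_components_finite V E A \<longleftrightarrow>
     (\<forall>v\<in>A. finite {w. (induced_edge V E A)\<^sup>*\<^sup>* v w})"

text \<open>Probability that a vertex is active: the Poisson random measure N_v of intensity
  Leb^2 \<otimes> \<sigma> charges the box (0,\<Delta>] \<times> (0,C] \<times> J with probability
  1 - exp(-\<Delta> \<sigma>(J) C); the vertices are independent.\<close>
definition active_prob ::
  "'j measure \<Rightarrow> (nat \<Rightarrow> real \<Rightarrow> real) \<Rightarrow> real \<Rightarrow> real \<Rightarrow> nat \<Rightarrow> real" where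
  "active_prob \<sigma> C T \<Delta> k = 1 - exp (- (\<Delta> * measure \<sigma> (space \<sigma>) * C k T))"

definition activity_law ::
  "'j measure \<Rightarrow> (nat \<Rightarrow> real \<Rightarrow> real) \<Rightarrow> real \<Rightarrow> real \<Rightarrow> 'v set \<Rightarrow> ('v \<Rightarrow> 'v \<Rightarrow> bool)
     \<Rightarrow> ('v \<Rightarrow> bool) measure" where
  "activity_law \<sigma> C T \<Delta> V E =
     (\<Pi>\<^sub>M v\<in>V. measure_pmf (bernoulli_pmf (active_prob \<sigma> C T \<Delta> (card (cl V E v)))))"

definition finitely_dissociable ::
  "'j measure \<Rightarrow> (nat \<Rightarrow> real \<Rightarrow> real) \<Rightarrow> 'v set \<Rightarrow> ('v \<Rightarrow> 'v \<Rightarrow> bool) \<Rightarrow> bool" where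
  "finitely_dissociable \<sigma> C V E \<longleftrightarrow>
     locally_finite V E \<and>
     (\<forall>T>0. \<exists>\<Delta>. 0 < \<Delta> \<and> \<Delta> \<le> T \<and>
        (AE a in activity_law \<sigma> C T \<Delta> V E. all_components_finite V E {v \<in> V. a v}))"

text \<open>Vertices are words u :: nat list; X u is the number of children of u.
  u = [i1,...,in] belongs to the tree iff each letter is smaller than the
  number of children of the corresponding ancestor.\<close>
definition GW_vertices :: "(nat list \<Rightarrow> nat) \<Rightarrow> nat list set" where
  "GW_vertices X = {u. \<forall>k<length u. u ! k < X (take k u)}"

definition tree_edge :: "nat list \<Rightarrow> nat list \<Rightarrow> bool" where
  "tree_edge u w \<longleftrightarrow> (\<exists>i. w = u @ [i]) \<or> (\<exists>i. u = w @ [i])"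

definition offspring_law :: "nat pmf \<Rightarrow> (nat list \<Rightarrow> nat) measure" where
  "offspring_law \<rho> = (\<Pi>\<^sub>M u\<in>(UNIV :: nat list set). measure_pmf \<rho>)"

end

theory Submission
  imports Defs
begin


definition valid :: "(nat list \<Rightarrow> nat) \<Rightarrow> nat list \<Rightarrow> nat list \<Rightarrow> bool" where
  "valid X t s \<longleftrightarrow> (\<forall>j<length s. s ! j < X (t @ take j s))"

definition Sk :: "(nat list \<Rightarrow> nat) \<Rightarrow> nat \<Rightarrow> nat list \<Rightarrow> nat list set" where
  "Sk X k t = {s. length s = k \<and> valid X t s}"

fun Gw :: "(nat list \<Rightarrow> ennreal) \<Rightarrow> (nat list \<Rightarrow> nat) \<Rightarrow> nat \<Rightarrow> nat list \<Rightarrow> ennreal" where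
  "Gw w X 0 t = 1"
| "Gw w X (Suc k) t = w t * (\<Sum>i<X t. Gw w X k (t @ [i]))"

lemma all_less_add: "(\<forall>k<a+b. P k) \<longleftrightarrow> (\<forall>k<a. P (k::nat)) \<and> (\<forall>j<b. P (a + j))"
proof (intro iffI conjI allI impI)
  assume h: "(\<forall>k<a. P k) \<and> (\<forall>j<b. P (a + j))"
  fix k assume k: "k < a + b"
  show "P k"
  proof (cases "k < a")
    case True then show ?thesis using h by blast
  next
    case False
    then have "k = a + (k - a)" "k - a < b" using k by simp_all
    then show ?thesis using h by metis
  qed
qed auto

lemma GW_append: "t @ s \<in> GW_vertices X \<longleftrightarrow> t \<in> GW_vertices X \<and> valid X t s"
proof -
  have "(\<forall>k<length (t@s). (t@s) ! k < X (take k (t@s))) \<longleftrightarrow>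
        (\<forall>k<length t. (t@s) ! k < X (take k (t@s))) \<and> (\<forall>j<length s. (t@s) ! (length t + j) < X (take (length t + j) (t@s)))"
    unfolding length_append by (rule all_less_add)
  also have "\<dots> \<longleftrightarrow> (\<forall>k<length t. t ! k < X (take k t)) \<and> valid X t s"
    by (simp add: nth_append valid_def)
  finally show ?thesis by (simp add: GW_vertices_def)
qed

lemma GW_take: "u \<in> GW_vertices X \<Longrightarrow> take j u \<in> GW_vertices X"
  by (metis GW_append append_take_drop_id)

lemma valid_Cons: "valid X t (i # s) \<longleftrightarrow> i < X t \<and> valid X (t @ [i]) s"
  unfolding valid_def by (simp add: All_less_Suc2)

lemma valid_take: "valid X t s \<Longrightarrow> valid X t (take k s)"
  unfolding valid_def by auto

lemma Sk_Suc: "Sk X (Suc k) t = (\<Union>i<X t. Cons i ` Sk X k (t @ [i]))"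
proof (rule set_eqI)
  fix s show "s \<in> Sk X (Suc k) t \<longleftrightarrow> s \<in> (\<Union>i<X t. Cons i ` Sk X k (t @ [i]))"
    by (cases s) (auto simp: Sk_def valid_Cons)
qed

lemma Sk_0: "Sk X 0 t = {[]}"
  by (auto simp: Sk_def valid_def)

lemma finite_Sk: "finite (Sk X k t)"
  by (induction k arbitrary: t) (auto simp: Sk_0 Sk_Suc)

lemma Gw_sum: "Gw w X k t = (\<Sum>s\<in>Sk X k t. \<Prod>j<k. w (t @ take j s))"
proof (induction k arbitrary: t)
  case 0
  then show ?case by (simp add: Sk_0)
next
  case (Suc k)
  have "(\<Sum>s\<in>Sk X (Suc k) t. \<Prod>j<Suc k. w (t @ take j s))
      = (\<Sum>i<X t. \<Sum>s\<in>Cons i ` Sk X k (t @ [i]). \<Prod>j<Suc k. w (t @ take j s))"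
    unfolding Sk_Suc
    by (rule sum.UNION_disjoint) (auto simp: finite_Sk)
  also have "\<dots> = (\<Sum>i<X t. \<Sum>s\<in>Sk X k (t @ [i]). w t * (\<Prod>j<k. w ((t @ [i]) @ take j s)))"
    by (subst sum.reindex) (auto simp del: prod.lessThan_Suc simp add: prod.lessThan_Suc_shift)
  also have "\<dots> = w t * (\<Sum>i<X t. Gw w X k (t @ [i]))"
    by (simp add: Suc sum_distrib_left)
  finally show ?case by simp
qed

lemma Gw_mono: "(\<And>u. w u \<le> w' u) \<Longrightarrow> Gw w X k t \<le> Gw w' X k t"
  by (induction k arbitrary: t) (auto intro!: mult_mono sum_mono)



definition Dset :: "(nat list \<Rightarrow> nat) \<Rightarrow> (nat list \<Rightarrow> bool) \<Rightarrow> nat list \<Rightarrow> nat list set" where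
  "Dset X a t = {u. \<exists>s. u = t @ s \<and> u \<in> GW_vertices X \<and> (\<forall>j\<le>length s. a (t @ take j s))}"

lemma comp_D:
  assumes v: "v \<in> GW_vertices X" "a v"
    and r: "(induced_edge (GW_vertices X) tree_edge {v\<in>GW_vertices X. a v})\<^sup>*\<^sup>* v u"
  shows "\<exists>j\<le>length v. u \<in> Dset X a (take j v)"
  using r
proof (induction rule: rtranclp_induct)
  case base
  show ?case using v by (intro exI[of _ "length v"]) (auto simp: Dset_def intro!: exI[of _ "[]"])
next
  case (step y z)
  from step.IH obtain j s where j: "j \<le> length v" and y: "y = take j v @ s" "y \<in> GW_vertices X"
     and as: "\<forall>i\<le>length s. a (take j v @ take i s)"
    by (auto simp: Dset_def)
  from step.hyps(2) have z: "z \<in> GW_vertices X" "a z" and te: "tree_edge y z"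
    by (auto simp: induced_edge_def)
  show ?case
  proof (cases "\<exists>i. z = y @ [i]")
    case True
    then obtain i where zi: "z = y @ [i]" by auto
    have "z \<in> Dset X a (take j v)"
      unfolding Dset_def
    proof (intro CollectI exI conjI allI impI)
      show "z = take j v @ (s @ [i])" using zi y by simp
      show "z \<in> GW_vertices X" by fact
      fix i' assume "i' \<le> length (s @ [i])"
      then consider "i' \<le> length s" | "i' = Suc (length s)" using le_Suc_eq by auto
      then show "a (take j v @ take i' (s @ [i]))"
      proof cases
        case 1 then show ?thesis using as by simp
      next
        case 2 then show ?thesis using z zi y by simp
      qed
    qed
    then show ?thesis using j by blast
  next
    case False
    with te obtain i where yi: "y = z @ [i]" by (auto simp: tree_edge_def)
    show ?thesis
    proof (cases "s = []")
      case True
      then have tj: "take j v = z @ [i]" using y yi by simp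
      have "length (take j v) = j" using j by simp
      then have jz: "j = Suc (length z)" using tj by simp
      then have lj: "length z = j - 1" "j \<ge> 1" by simp_all
      have "take (j - 1) v = take (j - 1) (take j v)" by simp
      also have "\<dots> = z" using tj jz by simp
      finally have "z \<in> Dset X a (take (j - 1) v)"
        using z by (auto simp: Dset_def intro!: exI[of _ "[]"])
      then show ?thesis using j by (intro exI[of _ "j - 1"]) auto
    next
      case False
      then obtain s' i' where s: "s = s' @ [i']" by (cases s rule: rev_cases) auto
      then have zs: "z = take j v @ s'" using y yi by simp
      have "z \<in> Dset X a (take j v)"
        unfolding Dset_def
      proof (intro CollectI exI conjI allI impI)
        show "z = take j v @ s'" by fact
        show "z \<in> GW_vertices X" by fact
        fix i'' assume "i'' \<le> length s'"
        then show "a (take j v @ take i'' s')" using as[rule_format, of i''] s by simp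
      qed
      then show ?thesis using j by blast
    qed
  qed
qed

lemma comps_finite:
  assumes fin: "\<forall>t\<in>GW_vertices X. finite (Dset X a t)"
  shows "all_components_finite (GW_vertices X) tree_edge {v \<in> GW_vertices X. a v}"
  unfolding all_components_finite_def
proof
  fix v assume "v \<in> {v \<in> GW_vertices X. a v}"
  then have v: "v \<in> GW_vertices X" "a v" by auto
  have "{w. (induced_edge (GW_vertices X) tree_edge {v\<in>GW_vertices X. a v})\<^sup>*\<^sup>* v w}
     \<subseteq> (\<Union>j\<le>length v. Dset X a (take j v))"
    proof
    fix w assume "w \<in> {w. (induced_edge (GW_vertices X) tree_edge {v\<in>GW_vertices X. a v})\<^sup>*\<^sup>* v w}"
    then have "(induced_edge (GW_vertices X) tree_edge {v\<in>GW_vertices X. a v})\<^sup>*\<^sup>* v w" by simp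
    from comp_D[where a=a and X=X and v=v, OF v this] show "w \<in> (\<Union>j\<le>length v. Dset X a (take j v))" by blast
  qed
  moreover have "\<And>j. finite (Dset X a (take j v))"
    using fin GW_take[OF v(1)] by blast
  then have "finite (\<Union>j\<le>length v. Dset X a (take j v))"
    by simp
  ultimately show "finite {w. (induced_edge (GW_vertices X) tree_edge {v\<in>GW_vertices X. a v})\<^sup>*\<^sup>* v w}"
    by (rule finite_subset)
qed

lemma Dset_infinite_level:
  assumes t: "t \<in> GW_vertices X" and inf: "infinite (Dset X a t)"
  shows "\<exists>s\<in>Sk X k t. \<forall>j<k. a (t @ take j s)"
proof -
  define F where "F = (\<lambda>s. t @ s) ` (\<Union>j<k. Sk X j t)"
  have "finite F" unfolding F_def by (auto simp: finite_Sk)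
  then have "\<not> Dset X a t \<subseteq> F" using inf finite_subset by blast
  then obtain u where u: "u \<in> Dset X a t" "u \<notin> F"
    by blast
  then obtain s where s: "u = t @ s" "u \<in> GW_vertices X" "\<forall>j\<le>length s. a (t @ take j s)"
    by (auto simp: Dset_def)
  have val: "valid X t s" using s GW_append by blast
  have "\<not> length s < k"
  proof
    assume "length s < k"
    then have "s \<in> (\<Union>j<k. Sk X j t)" using val by (auto simp: Sk_def)
    then show False using u s unfolding F_def by auto
  qed
  then have "take k s \<in> Sk X k t" using valid_take[OF val] by (auto simp: Sk_def)
  moreover have "\<forall>j<k. a (t @ take j (take k s))" using s \<open>\<not> length s < k\<close> by auto
  ultimately show ?thesis by blast
qed



lemma ennreal_le_summable_zero:
  fixes g :: "nat \<Rightarrow> ennreal"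
  assumes le: "\<And>k. e \<le> g k" and fin: "(\<Sum>k. g k) \<noteq> \<infinity>"
  shows "e = 0"
proof -
  have gt: "g k \<noteq> \<top>" for k
    using ennreal_suminf_lessD[of g \<top> k] fin by (simp add: less_top)
  define h where "h k = enn2real (g k)" for k
  have gh: "g k = ennreal (h k)" for k using gt[of k] unfolding h_def by (simp add: ennreal_enn2real_if)
  have "(\<Sum>i. ennreal (h i)) = (\<Sum>i. g i)" using gh by simp
  then have "summable h" using fin by (intro summable_suminf_not_top) (auto simp: h_def)
  then have "h \<longlonglongrightarrow> 0" by (rule summable_LIMSEQ_zero)
  moreover have "enn2real e \<le> h k" for k
    using le[of k] gt[of k] unfolding h_def by (intro enn2real_mono) (auto simp: less_top)
  ultimately have le0: "enn2real e \<le> 0" by (intro LIMSEQ_le_const[of h 0]) auto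
  have nt: "e \<noteq> \<top>" using le[of 0] gt[of 0] by (auto simp: top_unique)
  have z: "enn2real e = 0" using le0 enn2real_nonneg[of e] by linarith
  have "e = ennreal (enn2real e)" using nt by (simp add: ennreal_enn2real_if)
  then show "e = 0" using z by simp
qed



lemma Sk_in_V:
  assumes t: "t \<in> GW_vertices X" and s: "s \<in> Sk X k t" and j: "j \<le> k"
  shows "t @ take j s \<in> GW_vertices X"
proof -
  have "t @ s \<in> GW_vertices X" using t s GW_append by (auto simp: Sk_def)
  then have "take (length t + j) (t @ s) \<in> GW_vertices X" by (rule GW_take)
  then show ?thesis by simp
qed

lemma activity_AE:
  fixes X :: "nat list \<Rightarrow> nat" and q :: "nat list \<Rightarrow> real" and w :: "nat list \<Rightarrow> ennreal"
  assumes q01: "\<And>v. v \<in> GW_vertices X \<Longrightarrow> 0 \<le> q v \<and> q v \<le> 1"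
    and qw: "\<And>v. v \<in> GW_vertices X \<Longrightarrow> ennreal (q v) \<le> w v"
    and fin: "\<And>t. (\<Sum>k. Gw w X k t) \<noteq> \<infinity>"
  shows "AE a in (\<Pi>\<^sub>M v\<in>GW_vertices X. measure_pmf (bernoulli_pmf (q v))).
           all_components_finite (GW_vertices X) tree_edge {v \<in> GW_vertices X. a v}"
proof -
  define V where "V = GW_vertices X"
  define M where "M = (\<lambda>v. measure_pmf (bernoulli_pmf (q v)))"
  define P where "P = PiM V M"
  have Mprob: "\<And>v. prob_space (M v)" unfolding M_def by (rule prob_space_measure_pmf)
  interpret P: prob_space P unfolding P_def by (rule prob_space_PiM) (rule Mprob)
  have main: "AE a in P. t \<in> V \<longrightarrow> finite (Dset X a t)" for t
  proof (cases "t \<in> V")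
    case False then show ?thesis by simp
  next
    case t: True
    define J where "J s = (\<lambda>j. t @ take j s) ` {..<length s}" for s
    define Cs where "Cs s = prod_emb V M (J s) (\<Pi>\<^sub>E u\<in>J s. {True})" for s
    define B where "B k = (\<Union>s\<in>Sk X k t. Cs s)" for k
    have JV: "J s \<subseteq> V" if "s \<in> Sk X k t" for s k
      using Sk_in_V[OF t[unfolded V_def] that] that unfolding J_def V_def Sk_def by auto
    have finJ: "finite (J s)" for s unfolding J_def by simp
    have Cs_sets: "Cs s \<in> sets P" if "s \<in> Sk X k t" for s k
      unfolding Cs_def P_def using finJ JV[OF that]
      by (intro sets_PiM_I) (auto simp: M_def)
    have inj: "inj_on (\<lambda>j. t @ take j s) {..<length s}" for s
    proof (rule inj_onI)
      fix x y assume xy: "x \<in> {..<length s}" "y \<in> {..<length s}" "t @ take x s = t @ take y s"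
      then have "length (take x s) = length (take y s)" by simp
      then show "x = y" using xy(1,2) by simp
    qed
    have Cs_meas: "emeasure P (Cs s) = (\<Prod>j<k. ennreal (q (t @ take j s)))" if s: "s \<in> Sk X k t" for s k
    proof -
      have ls: "length s = k" using s by (simp add: Sk_def)
      have "emeasure P (Cs s) = (\<Prod>u\<in>J s. emeasure (M u) {True})"
        unfolding P_def Cs_def using finJ JV[OF s]
        by (intro emeasure_PiM_emb Mprob) (auto simp: M_def)
      also have "\<dots> = (\<Prod>u\<in>J s. ennreal (q u))"
      proof (rule prod.cong[OF refl])
        fix u assume "u \<in> J s"
        then have "u \<in> V" using JV[OF s] by auto
        then show "emeasure (M u) {True} = ennreal (q u)"
          using q01[of u] unfolding M_def V_def by (simp add: emeasure_pmf_single pmf_bernoulli_True)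
      qed
      also have "\<dots> = (\<Prod>j<k. ennreal (q (t @ take j s)))"
        unfolding J_def using ls by (subst prod.reindex[OF inj]) simp
      finally show ?thesis .
    qed
    define q' where "q' u = (if u \<in> V then ennreal (q u) else w u)" for u
    have q'w: "q' u \<le> w u" for u using qw unfolding q'_def V_def by auto
    have B_sets: "B k \<in> sets P" for k
      unfolding B_def by (rule sets.finite_UN[OF finite_Sk]) (rule Cs_sets)
    have B_le: "emeasure P (B k) \<le> Gw w X k t" for k
    proof -
      have "emeasure P (B k) \<le> (\<Sum>s\<in>Sk X k t. emeasure P (Cs s))"
        unfolding B_def using Cs_sets finite_Sk by (intro emeasure_subadditive_finite) auto
      also have "\<dots> = (\<Sum>s\<in>Sk X k t. \<Prod>j<k. q' (t @ take j s))"
      proof (rule sum.cong[OF refl])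
        fix s assume s: "s \<in> Sk X k t"
        have "(\<Prod>j<k. ennreal (q (t @ take j s))) = (\<Prod>j<k. q' (t @ take j s))"
          using Sk_in_V[OF t[unfolded V_def] s] unfolding q'_def V_def by (intro prod.cong) auto
        then show "emeasure P (Cs s) = (\<Prod>j<k. q' (t @ take j s))" using Cs_meas[OF s] by simp
      qed
      also have "\<dots> = Gw q' X k t" by (simp add: Gw_sum)
      also have "\<dots> \<le> Gw w X k t" by (rule Gw_mono) (rule q'w)
      finally show ?thesis .
    qed
    define N where "N = (\<Inter>k. B k)"
    have N_sets: "N \<in> sets P" unfolding N_def by (rule sets.countable_INT) (use B_sets in auto)
    have "emeasure P N \<le> Gw w X k t" for k
    proof -
      have "emeasure P N \<le> emeasure P (B k)" unfolding N_def using B_sets by (intro emeasure_mono) auto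
      then show ?thesis using B_le[of k] by simp
    qed
    then have N0: "emeasure P N = 0" by (rule ennreal_le_summable_zero) (rule fin)
    show ?thesis
    proof (rule AE_I'[of N])
      show "N \<in> null_sets P" using N_sets N0 by auto
      show "{a \<in> space P. \<not> (t \<in> V \<longrightarrow> finite (Dset X a t))} \<subseteq> N"
      proof
        fix a assume a: "a \<in> {a \<in> space P. \<not> (t \<in> V \<longrightarrow> finite (Dset X a t))}"
        then have inf: "infinite (Dset X a t)" and asp: "a \<in> space P" by auto
        show "a \<in> N" unfolding N_def
        proof
          fix k
          obtain s where s: "s \<in> Sk X k t" and as: "\<forall>j<k. a (t @ take j s)"
            using Dset_infinite_level[OF t[unfolded V_def] inf] by blast
          have ls: "length s = k" using s by (simp add: Sk_def)
          have a1: "a \<in> (\<Pi>\<^sub>E i\<in>V. space (M i))" using asp unfolding P_def by (simp add: space_PiM)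
          have a2: "restrict a (J s) \<in> (\<Pi>\<^sub>E u\<in>J s. {True})"
            using as ls unfolding J_def by (auto simp: restrict_def fun_eq_iff)
          have "a \<in> Cs s"
            unfolding Cs_def prod_emb_def using a1 a2 by blast
          then show "a \<in> B k" unfolding B_def using s by blast
        qed
      qed
    qed
  qed
  have "AE a in P. \<forall>t. t \<in> V \<longrightarrow> finite (Dset X a t)"
    unfolding AE_all_countable by (rule allI) (rule main)
  then have "AE a in P. all_components_finite (GW_vertices X) tree_edge {v \<in> GW_vertices X. a v}"
  proof (rule eventually_mono)
    fix a assume "\<forall>t. t \<in> V \<longrightarrow> finite (Dset X a t)"
    then have "\<forall>t\<in>GW_vertices X. finite (Dset X a t)" unfolding V_def by blast
    then show "all_components_finite (GW_vertices X) tree_edge {v \<in> GW_vertices X. a v}"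
      by (rule comps_finite)
  qed
  then show ?thesis unfolding P_def V_def M_def .
qed



abbreviation Pm :: "nat pmf \<Rightarrow> nat list set \<Rightarrow> (nat list \<Rightarrow> nat) measure" where
  "Pm \<rho> I \<equiv> PiM I (\<lambda>_. measure_pmf \<rho>)"

lemma comp_meas: "(\<lambda>X. X u) \<in> Pm \<rho> I \<rightarrow>\<^sub>M count_space UNIV"
proof (cases "u \<in> I")
  case True
  then have "(\<lambda>X. X u) \<in> Pm \<rho> I \<rightarrow>\<^sub>M measure_pmf \<rho>" by (rule measurable_component_singleton)
  moreover have "measurable (Pm \<rho> I) (measure_pmf \<rho>) = measurable (Pm \<rho> I) (count_space UNIV)"
    by (rule measurable_cong_sets) auto
  ultimately show ?thesis by simp
next
  case False
  show ?thesis
    apply (subst measurable_cong[where g="\<lambda>X. undefined"])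
    using False apply (auto simp: space_PiM PiE_def extensional_def)
    done
qed

lemma G_meas: "(\<lambda>X. Gw (\<lambda>u. f (X u)) X k t) \<in> borel_measurable (Pm \<rho> I)"
proof (induction k arbitrary: t)
  case 0
  then show ?case by simp
next
  case (Suc k)
  have eq: "(\<lambda>X. Gw (\<lambda>u. f (X u)) X (Suc k) t) =
    (\<lambda>X. (\<lambda>n X. f n * (\<Sum>i<n. Gw (\<lambda>u. f (X u)) X k (t @ [i]))) (X t) X)" by simp
  have inner: "(\<lambda>X. f n * (\<Sum>i<n. Gw (\<lambda>u. f (X u)) X k (t @ [i]))) \<in> borel_measurable (Pm \<rho> I)" for n
    using Suc.IH by measurable
  show ?case unfolding eq
    by (rule measurable_compose_countable[OF inner comp_meas])
qed

lemma G_ignore: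
  assumes "\<not> (\<exists>r. w = t @ r)"
  shows "Gw (\<lambda>u. f ((X(w := x)) u)) (X(w := x)) k t = Gw (\<lambda>u. f (X u)) X k t"
  using assms
proof (induction k arbitrary: t)
  case 0
  then show ?case by simp
next
  case (Suc k)
  have wt: "w \<noteq> t" using Suc.prems by (metis append_Nil2)
  have "\<not> (\<exists>r. w = (t @ [i]) @ r)" for i using Suc.prems by auto
  then show ?case using Suc.IH wt by simp
qed

lemma decomp:
  fixes g :: "(nat list \<Rightarrow> nat) \<Rightarrow> ennreal"
  assumes g: "g \<in> borel_measurable (Pm \<rho> UNIV)"
  shows "(\<integral>\<^sup>+X. g X \<partial>Pm \<rho> UNIV) = (\<integral>\<^sup>+x. \<integral>\<^sup>+Y. g (Y(t := x)) \<partial>Pm \<rho> (UNIV - {t}) \<partial>measure_pmf \<rho>)"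
proof -
  let ?Q = "Pm \<rho> (UNIV - {t})"
  interpret Q: prob_space ?Q by (rule prob_space_PiM) (rule prob_space_measure_pmf)
  have mm: "(\<lambda>p. (snd p)(t := fst p)) \<in> measure_pmf \<rho> \<Otimes>\<^sub>M ?Q \<rightarrow>\<^sub>M Pm \<rho> UNIV"
    by (rule measurable_fun_upd[where J="UNIV - {t}"]) auto
  have eq0: "distr (measure_pmf \<rho> \<Otimes>\<^sub>M ?Q) (Pm \<rho> (insert t (UNIV - {t}))) (\<lambda>(x, X). X(t := x)) = Pm \<rho> (insert t (UNIV - {t}))"
    by (rule distr_pair_PiM_eq_PiM) (auto intro: prob_space_measure_pmf)
  have ins: "insert t (UNIV - {t}) = UNIV" by auto
  have eq: "distr (measure_pmf \<rho> \<Otimes>\<^sub>M ?Q) (Pm \<rho> UNIV) (\<lambda>p. (snd p)(t := fst p)) = Pm \<rho> UNIV"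
    using eq0 unfolding ins by (simp add: case_prod_beta')
  have "(\<integral>\<^sup>+X. g X \<partial>Pm \<rho> UNIV) = (\<integral>\<^sup>+X. g X \<partial>distr (measure_pmf \<rho> \<Otimes>\<^sub>M ?Q) (Pm \<rho> UNIV) (\<lambda>p. (snd p)(t := fst p)))"
    by (simp only: eq)
  also have "\<dots> = (\<integral>\<^sup>+p. g ((snd p)(t := fst p)) \<partial>(measure_pmf \<rho> \<Otimes>\<^sub>M ?Q))"
    by (rule nn_integral_distr[OF mm]) (simp add: g)
  also have "\<dots> = (\<integral>\<^sup>+x. \<integral>\<^sup>+Y. g (Y(t := x)) \<partial>?Q \<partial>measure_pmf \<rho>)"
    using Q.nn_integral_fst[of "\<lambda>p. g ((snd p)(t := fst p))" "measure_pmf \<rho>"]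
      measurable_comp[OF mm g] by (simp add: comp_def)
  finally show ?thesis .
qed

lemma decomp2:
  fixes g :: "(nat list \<Rightarrow> nat) \<Rightarrow> ennreal"
  assumes g: "g \<in> borel_measurable (Pm \<rho> UNIV)" and g': "g \<in> borel_measurable (Pm \<rho> (UNIV - {t}))"
    and ign: "\<And>X x. g (X(t := x)) = g X"
  shows "(\<integral>\<^sup>+Y. g Y \<partial>Pm \<rho> (UNIV - {t})) = (\<integral>\<^sup>+X. g X \<partial>Pm \<rho> UNIV)"
proof -
  have "(\<integral>\<^sup>+X. g X \<partial>Pm \<rho> UNIV) = (\<integral>\<^sup>+x. \<integral>\<^sup>+Y. g Y \<partial>Pm \<rho> (UNIV - {t}) \<partial>measure_pmf \<rho>)"
    unfolding decomp[OF g, of t] ign ..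
  also have "\<dots> = (\<integral>\<^sup>+Y. g Y \<partial>Pm \<rho> (UNIV - {t}))"
    by (simp add: measure_pmf.emeasure_space_1)
  finally show ?thesis by simp
qed

lemma G_expect:
  "(\<integral>\<^sup>+X. Gw (\<lambda>u. f (X u)) X k t \<partial>Pm \<rho> UNIV) = (\<integral>\<^sup>+x. of_nat x * f x \<partial>measure_pmf \<rho>) ^ k"
proof (induction k arbitrary: t)
  case 0
  interpret P: prob_space "Pm \<rho> UNIV" by (rule prob_space_PiM) (rule prob_space_measure_pmf)
  show ?case by (simp add: P.emeasure_space_1)
next
  case (Suc k)
  define \<mu> where "\<mu> = (\<integral>\<^sup>+x. of_nat x * f x \<partial>measure_pmf \<rho>)"
  let ?Q = "Pm \<rho> (UNIV - {t})"
  let ?G = "\<lambda>i X. Gw (\<lambda>u. f (X u)) X k (t @ [i])"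
  have nt: "\<not> (\<exists>r. t = (t @ [i]) @ r)" for i by (auto dest: arg_cong[where f=length])
  have "(\<integral>\<^sup>+X. Gw (\<lambda>u. f (X u)) X (Suc k) t \<partial>Pm \<rho> UNIV)
     = (\<integral>\<^sup>+x. \<integral>\<^sup>+Y. Gw (\<lambda>u. f ((Y(t := x)) u)) (Y(t := x)) (Suc k) t \<partial>?Q \<partial>measure_pmf \<rho>)"
    by (rule decomp) (rule G_meas)
  also have "\<dots> = (\<integral>\<^sup>+x. \<integral>\<^sup>+Y. f x * (\<Sum>i<x. ?G i Y) \<partial>?Q \<partial>measure_pmf \<rho>)"
    by (simp only: Gw.simps fun_upd_same G_ignore[OF nt])
  also have "\<dots> = (\<integral>\<^sup>+x. f x * (\<Sum>i<x. \<integral>\<^sup>+Y. ?G i Y \<partial>?Q) \<partial>measure_pmf \<rho>)"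
  proof (intro nn_integral_cong)
    fix x
    have "(\<integral>\<^sup>+Y. f x * (\<Sum>i<x. ?G i Y) \<partial>?Q) = f x * (\<integral>\<^sup>+Y. (\<Sum>i<x. ?G i Y) \<partial>?Q)"
      by (rule nn_integral_cmult) (intro borel_measurable_sum G_meas)
    also have "(\<integral>\<^sup>+Y. (\<Sum>i<x. ?G i Y) \<partial>?Q) = (\<Sum>i<x. \<integral>\<^sup>+Y. ?G i Y \<partial>?Q)"
      by (rule nn_integral_sum) (rule G_meas)
    finally show "(\<integral>\<^sup>+Y. f x * (\<Sum>i<x. ?G i Y) \<partial>?Q) = f x * (\<Sum>i<x. \<integral>\<^sup>+Y. ?G i Y \<partial>?Q)" .
  qed
  also have "\<dots> = (\<integral>\<^sup>+x. f x * (\<Sum>i<x. \<mu> ^ k) \<partial>measure_pmf \<rho>)"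
  proof (intro nn_integral_cong arg_cong2[where f="(*)"] refl sum.cong)
    fix i
    have "(\<integral>\<^sup>+Y. ?G i Y \<partial>?Q) = (\<integral>\<^sup>+Y. ?G i Y \<partial>Pm \<rho> UNIV)"
      by (rule decomp2) (rule G_meas, rule G_meas, rule G_ignore[OF nt])
    then show "(\<integral>\<^sup>+Y. ?G i Y \<partial>?Q) = \<mu> ^ k" using Suc.IH by (simp add: \<mu>_def)
  qed
  also have "\<dots> = (\<integral>\<^sup>+x. (of_nat x * f x) * \<mu> ^ k \<partial>measure_pmf \<rho>)"
    by (simp add: mult_ac)
  also have "\<dots> = \<mu> * \<mu> ^ k"
    unfolding \<mu>_def by (rule nn_integral_multc) simp
  finally show ?case by (simp add: \<mu>_def)
qed



lemma nbrs_sub: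
  assumes v: "v \<in> GW_vertices X"
  shows "nbrs (GW_vertices X) tree_edge v \<subseteq> insert (butlast v) ((\<lambda>i. v @ [i]) ` {..<X v})"
proof
  fix w assume "w \<in> nbrs (GW_vertices X) tree_edge v"
  then have w: "w \<in> GW_vertices X" "tree_edge v w" by (auto simp: nbrs_def)
  show "w \<in> insert (butlast v) ((\<lambda>i. v @ [i]) ` {..<X v})"
  proof (cases "\<exists>i. w = v @ [i]")
    case True
    then obtain i where i: "w = v @ [i]" by blast
    then have "valid X v [i]" using w(1) GW_append by blast
    then have "i < X v" by (simp add: valid_def)
    then show ?thesis using i by blast
  next
    case False
    then obtain i where "v = w @ [i]" using w(2) by (auto simp: tree_edge_def)
    then have "w = butlast v" by simp
    then show ?thesis by blast
  qed
qed

lemma locally_finite_GW: "locally_finite (GW_vertices X) tree_edge"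
  unfolding locally_finite_def
proof
  fix v assume "v \<in> GW_vertices X"
  from nbrs_sub[OF this] show "finite (nbrs (GW_vertices X) tree_edge v)"
    by (rule finite_subset) simp
qed

lemma card_cl:
  assumes v: "v \<in> GW_vertices X"
  shows "1 \<le> card (cl (GW_vertices X) tree_edge v) \<and> card (cl (GW_vertices X) tree_edge v) \<le> X v + 2"
proof -
  let ?S = "insert v (insert (butlast v) ((\<lambda>i. v @ [i]) ` {..<X v}))"
  have sub: "cl (GW_vertices X) tree_edge v \<subseteq> ?S" using nbrs_sub[OF v] by (auto simp: cl_def)
  have finS: "finite ?S" by simp
  have "card ?S \<le> card ((\<lambda>i. v @ [i]) ` {..<X v}) + 2"
    by (simp add: card_insert_if)
  also have "card ((\<lambda>i. v @ [i]) ` {..<X v}) \<le> X v"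
    using card_image_le[of "{..<X v}" "\<lambda>i. v @ [i]"] by simp
  finally have cS: "card ?S \<le> X v + 2" by simp
  have fincl: "finite (cl (GW_vertices X) tree_edge v)" using sub finS by (rule finite_subset)
  have "card (cl (GW_vertices X) tree_edge v) \<le> card ?S" by (rule card_mono[OF finS sub])
  moreover have "1 \<le> card (cl (GW_vertices X) tree_edge v)"
    using fincl by (simp add: cl_def Suc_le_eq card_gt_0_iff)
  ultimately show ?thesis using cS by simp
qed

lemma mu_small:
  fixes \<rho> :: "nat pmf" and c :: "nat \<Rightarrow> real"
  assumes int: "integrable (measure_pmf \<rho>) real" and c: "\<And>x. 0 \<le> c x"
  shows "\<exists>\<delta>>0. (\<integral>\<^sup>+x. of_nat x * ennreal (1 - exp (- (\<delta> * c x))) \<partial>measure_pmf \<rho>) < 1"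
proof -
  define u where "u j x = ennreal (real x * (1 - exp (- (inverse (real (Suc j)) * c x))))" for j x
  have ub: "u j x \<le> ennreal (real x)" for j x
  proof -
    have "0 \<le> inverse (real (Suc j)) * c x" using c[of x] by simp
    then have "exp (- (inverse (real (Suc j)) * c x)) \<le> 1" "0 < exp (- (inverse (real (Suc j)) * c x))" by auto
    then have "real x * (1 - exp (- (inverse (real (Suc j)) * c x))) \<le> real x * 1"
      by (intro mult_left_mono) auto
    then show ?thesis unfolding u_def by (intro ennreal_leI) simp
  qed
  have fin: "(\<integral>\<^sup>+x. ennreal (real x) \<partial>measure_pmf \<rho>) < \<infinity>"
    using nn_integral_eq_integral[OF int] by simp
  have lim1: "(\<lambda>j. real x * (1 - exp (- (inverse (real (Suc j)) * c x)))) \<longlonglongrightarrow> real x * (1 - exp (- (0 * c x)))" for x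
    by (intro tendsto_intros LIMSEQ_inverse_real_of_nat)
  have lim: "(\<lambda>j. u j x) \<longlonglongrightarrow> 0" for x
    using tendsto_ennrealI[OF lim1[of x]] unfolding u_def by simp
  have "(\<lambda>j. \<integral>\<^sup>+x. u j x \<partial>measure_pmf \<rho>) \<longlonglongrightarrow> (\<integral>\<^sup>+x. 0 \<partial>measure_pmf \<rho>)"
    by (rule nn_integral_dominated_convergence[where w="\<lambda>x. ennreal (real x)"])
       (use ub fin lim in \<open>auto simp: measurable_pmf_measure1\<close>)
  then have "(\<lambda>j. \<integral>\<^sup>+x. u j x \<partial>measure_pmf \<rho>) \<longlonglongrightarrow> 0" by simp
  then have "eventually (\<lambda>j. (\<integral>\<^sup>+x. u j x \<partial>measure_pmf \<rho>) < 1) sequentially"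
    by (rule order_tendstoD) simp
  then obtain j where j: "(\<integral>\<^sup>+x. u j x \<partial>measure_pmf \<rho>) < 1"
    by (auto simp: eventually_sequentially)
  have eq: "of_nat x * ennreal (1 - exp (- (inverse (real (Suc j)) * c x))) = u j x" for x
  proof -
    have "0 \<le> inverse (real (Suc j)) * c x" using c[of x] by simp
    then have "0 \<le> 1 - exp (- (inverse (real (Suc j)) * c x))" by simp
    then show ?thesis unfolding u_def
      by (simp add: ennreal_mult ennreal_of_nat_eq_real_of_nat)
  qed
  show ?thesis
    by (rule exI[of _ "inverse (real (Suc j))"]) (use j eq in simp)
qed

lemma geom_fin:
  fixes \<mu> :: ennreal
  assumes "\<mu> < 1"
  shows "(\<Sum>k. \<mu> ^ k) \<noteq> \<infinity>"
proof -
  obtain r where r: "\<mu> = ennreal r" "0 \<le> r" using assms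
    by (cases \<mu> rule: ennreal_cases) auto
  have "r < 1" using assms r by (simp add: ennreal_less_iff)
  have "(\<Sum>k. ennreal (r ^ k)) \<noteq> \<top>"
    by (rule ennreal_suminf_neq_top) (use r \<open>r < 1\<close> in \<open>auto intro: summable_geometric\<close>)
  then show ?thesis using r by (simp add: ennreal_power)
qed

lemma AE_G:
  assumes "(\<integral>\<^sup>+x. of_nat x * f x \<partial>measure_pmf \<rho>) < 1"
  shows "AE X in Pm \<rho> UNIV. \<forall>t. (\<Sum>k. Gw (\<lambda>u. f (X u)) X k t) \<noteq> \<infinity>"
  unfolding AE_all_countable
proof
  fix t
  have m: "(\<lambda>X. \<Sum>k. Gw (\<lambda>u. f (X u)) X k t) \<in> borel_measurable (Pm \<rho> UNIV)"
    by (rule borel_measurable_suminf_order) (rule G_meas)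
  have "(\<integral>\<^sup>+X. (\<Sum>k. Gw (\<lambda>u. f (X u)) X k t) \<partial>Pm \<rho> UNIV)
      = (\<Sum>k. \<integral>\<^sup>+X. Gw (\<lambda>u. f (X u)) X k t \<partial>Pm \<rho> UNIV)"
    by (rule nn_integral_suminf) (rule G_meas)
  also have "\<dots> = (\<Sum>k. (\<integral>\<^sup>+x. of_nat x * f x \<partial>measure_pmf \<rho>) ^ k)"
    by (simp add: G_expect)
  finally have "(\<integral>\<^sup>+X. (\<Sum>k. Gw (\<lambda>u. f (X u)) X k t) \<partial>Pm \<rho> UNIV) \<noteq> \<infinity>"
    using geom_fin[OF assms] by simp
  from nn_integral_noteq_infinite[OF m this]
  show "AE X in Pm \<rho> UNIV. (\<Sum>k. Gw (\<lambda>u. f (X u)) X k t) \<noteq> \<infinity>" .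
qed



theorem mainTheorem9:
  fixes \<rho> :: "nat pmf"
    and \<sigma> :: "'j measure"
    and C :: "nat \<Rightarrow> real \<Rightarrow> real"
  assumes first_moment: "integrable (measure_pmf \<rho>) real"
    and J_countable: "countable (space \<sigma>)"
    and J_sets: "sets \<sigma> = Pow (space \<sigma>)"
    and \<sigma>_finite: "finite_measure \<sigma>"
    and \<sigma>_pos: "emeasure \<sigma> (space \<sigma>) > 0"
    and C_pos: "\<And>k T. 1 \<le> k \<Longrightarrow> 0 \<le> T \<Longrightarrow> C k T > 0"
    and C_mono: "\<And>k k' T T'. 1 \<le> k \<Longrightarrow> k \<le> k' \<Longrightarrow> 0 \<le> T \<Longrightarrow> T \<le> T' \<Longrightarrow> C k T \<le> C k' T'"
  shows "AE X in offspring_law \<rho>. finitely_dissociable \<sigma> C (GW_vertices X) tree_edge"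
proof -
  define m where "m = measure \<sigma> (space \<sigma>)"
  have m0: "0 \<le> m" unfolding m_def by simp
  define c where "c n x = m * C (x + 2) (real n)" for n x
  have c0: "0 \<le> c n x" for n x
    unfolding c_def using m0 C_pos[of "x + 2" "real n"] by simp
  have "\<forall>n. \<exists>\<delta>>0. (\<integral>\<^sup>+x. of_nat x * ennreal (1 - exp (- (\<delta> * c n x))) \<partial>measure_pmf \<rho>) < 1"
  proof
    fix n show "\<exists>\<delta>>0. (\<integral>\<^sup>+x. of_nat x * ennreal (1 - exp (- (\<delta> * c n x))) \<partial>measure_pmf \<rho>) < 1"
      by (rule mu_small[OF first_moment]) (rule c0)
  qed
  from choice[OF this] obtain \<delta> where \<delta>0: "\<forall>n. \<delta> n > 0 \<and>
    (\<integral>\<^sup>+x. of_nat x * ennreal (1 - exp (- (\<delta> n * c n x))) \<partial>measure_pmf \<rho>) < 1"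
    by (elim exE)
  have \<delta>: "\<delta> n > 0" "(\<integral>\<^sup>+x. of_nat x * ennreal (1 - exp (- (\<delta> n * c n x))) \<partial>measure_pmf \<rho>) < 1" for n
    using \<delta>0 by simp_all
  define f where "f n x = ennreal (1 - exp (- (\<delta> n * c n x)))" for n x
  have "\<forall>n. AE X in Pm \<rho> UNIV. \<forall>t. (\<Sum>k. Gw (\<lambda>u. f n (X u)) X k t) \<noteq> \<infinity>"
  proof
    fix n show "AE X in Pm \<rho> UNIV. \<forall>t. (\<Sum>k. Gw (\<lambda>u. f n (X u)) X k t) \<noteq> \<infinity>"
      by (rule AE_G) (use \<delta>(2)[of n] in \<open>simp add: f_def\<close>)
  qed
  then have AEX: "AE X in Pm \<rho> UNIV. \<forall>n t. (\<Sum>k. Gw (\<lambda>u. f n (X u)) X k t) \<noteq> \<infinity>"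
    unfolding AE_all_countable .
  show ?thesis
    unfolding offspring_law_def
  proof (rule eventually_mono[OF AEX])
    fix X assume finX: "\<forall>n t. (\<Sum>k. Gw (\<lambda>u. f n (X u)) X k t) \<noteq> \<infinity>"
    let ?V = "GW_vertices X"
    show "finitely_dissociable \<sigma> C ?V tree_edge"
      unfolding finitely_dissociable_def
    proof (intro conjI allI impI locally_finite_GW)
      fix T :: real assume T: "0 < T"
      define n where "n = nat \<lceil>T\<rceil>"
      have Tn: "T \<le> real n" unfolding n_def by (rule real_nat_ceiling_ge)
      define \<Delta> where "\<Delta> = min T (\<delta> n)"
      have \<Delta>: "0 < \<Delta>" "\<Delta> \<le> T" "\<Delta> \<le> \<delta> n" using T \<delta>(1)[of n] by (auto simp: \<Delta>_def)
      define q where "q v = active_prob \<sigma> C T \<Delta> (card (cl ?V tree_edge v))" for v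
      have qprops: "0 \<le> q v \<and> q v \<le> 1 \<and> ennreal (q v) \<le> f n (X v)" if v: "v \<in> ?V" for v
      proof -
        define k where "k = card (cl ?V tree_edge v)"
        have k: "1 \<le> k" "k \<le> X v + 2" using card_cl[OF v] unfolding k_def by auto
        have Ck: "0 < C k T" using C_pos[OF k(1)] T by simp
        have Ck2: "C k T \<le> C (X v + 2) (real n)" by (rule C_mono[OF k(1) k(2)]) (use T Tn in auto)
        have a0: "0 \<le> \<Delta> * m * C k T" using \<Delta> m0 Ck by simp
        have "\<Delta> * m * C k T \<le> \<delta> n * (m * C (X v + 2) (real n))"
        proof -
          have "\<Delta> * m * C k T = \<Delta> * (m * C k T)" by simp
          also have "\<dots> \<le> \<delta> n * (m * C (X v + 2) (real n))"
            using \<Delta> m0 Ck Ck2 by (intro mult_mono mult_left_mono) auto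
          finally show ?thesis .
        qed
        then have le: "1 - exp (- (\<Delta> * m * C k T)) \<le> 1 - exp (- (\<delta> n * c n (X v)))"
          unfolding c_def by simp
        have "q v = 1 - exp (- (\<Delta> * m * C k T))"
          unfolding q_def k_def active_prob_def m_def by simp
        moreover have "0 < exp (- (\<Delta> * m * C k T))" by simp
        moreover have "exp (- (\<Delta> * m * C k T)) \<le> 1" using a0 by simp
        moreover have "ennreal (1 - exp (- (\<Delta> * m * C k T))) \<le> f n (X v)"
          unfolding f_def using le by (rule ennreal_leI)
        ultimately show ?thesis by simp
      qed
      have "AE a in (\<Pi>\<^sub>M v\<in>?V. measure_pmf (bernoulli_pmf (q v))).
           all_components_finite ?V tree_edge {v \<in> ?V. a v}"
      proof (rule activity_AE[where w="\<lambda>u. f n (X u)"])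
        fix v assume "v \<in> ?V"
        from qprops[OF this] show "0 \<le> q v \<and> q v \<le> 1" by simp
      next
        fix v assume "v \<in> ?V"
        from qprops[OF this] show "ennreal (q v) \<le> f n (X v)" by simp
      next
        fix t show "(\<Sum>k. Gw (\<lambda>u. f n (X u)) X k t) \<noteq> \<infinity>" using finX by simp
      qed
      then have "AE a in activity_law \<sigma> C T \<Delta> ?V tree_edge. all_components_finite ?V tree_edge {v \<in> ?V. a v}"
        unfolding activity_law_def q_def .
      then show "\<exists>\<Delta>>0. \<Delta> \<le> T \<and> (AE a in activity_law \<sigma> C T \<Delta> ?V tree_edge. all_components_finite ?V tree_edge {v \<in> ?V. a v})"
        using \<Delta> by blast
    qed
  qed
qed

end
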